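(* Let $\mathcal H=(M,n,\mathcal R)$ be a BMS, $S\subseteq\mathbb R^n$ a bounded convex polytope, and $x_0$ a point in the interior of $S$. The scheduler has a static winning strategy from $x_0$ if and only if there is a set $M'\subseteq M$ such that $\mathcal R(m)$ is a singleton $\{R(m)\}$ for every $m\in M'$ and the CMS $(M',n,R)$ is safe.
   Context: A multi-mode system is a tuple $\mathcal H=(M,n,\mathcal R)$ with $M$ a finite nonempty set of modes, $n\ge1$ variables, and $\mathcal R:M\to 2^{\mathbb R^n}$ giving nonempty rate sets; it is a BMS if each $\mathcal R(m)$ is a bounded convex polytope, a CMS if each is a singleton. A CMS $(M',n,R)$ is safe if there are $t_m\ge0$ ($m\in M'$) with $\sum_{m\in M'}t_m=1$ and $\sum_{m\in M'}t_mR(m)=\vec0$ (in particular $M'\neq\emptyset$). The schedulability game from $x_0$: in round $i\ge1$ the scheduler chooses $(m_i,t_i)\in M\times\mathbb R_{>0}$, the environment chooses $r_i\in\mathcal R(m_i)$, and $x_i=x_{i-1}+t_ir_i$. Scheduler strategies map finite histories $\langle x_0,(m_1,t_1),r_1,x_1,\dots,x_k\rangle$ to timed moves; environment strategies map a history and current timed move $(m,t)$ to a rate in $\mathcal R(m)$. A scheduler strategy $\sigma$ is static if $\sigma(\rho)=\sigma(\rho')$ for any two histories $\rho,\rho'$ of the same length with the same starting state and the same sequence of timed moves (i.e. it ignores the environment's choices), so it amounts to a fixed sequence $(m_1,t_1),(m_2,t_2),\dots$. A scheduler strategy is winning from $x_0$ if against every environment strategy the run satisfies $x_i\in S$ and $x_i+tr_{i+1}\in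 S$ for all $i\ge0$, $t\in[0,t_{i+1}]$, and $\sum_it_i=\infty$. *)

theory Defs
  imports "HOL-Analysis.Analysis"
begin

definition is_BMS :: "'m set \<Rightarrow> ('m \<Rightarrow> (real^'n) set) \<Rightarrow> bool" where
  "is_BMS M R \<longleftrightarrow> finite M \<and> M \<noteq> {} \<and> (\<forall>m\<in>M. R m \<noteq> {} \<and> polytope (R m))"

definition safe_CMS :: "'m set \<Rightarrow> ('m \<Rightarrow> real^'n) \<Rightarrow> bool" where
  "safe_CMS M' Rc \<longleftrightarrow> M' \<noteq> {} \<and>
     (\<exists>t. (\<forall>m\<in>M'. 0 \<le> t m) \<and> sum t M' = 1 \<and> (\<Sum>m\<in>M'. t m *\<^sub>R Rc m) = 0)"

definition pos :: "real^'n \<Rightarrow> (nat \<Rightarrow> real) \<Rightarrow> (nat \<Rightarrow> real^'n) \<Rightarrow> nat \<Rightarrow> real^'n" where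
  "pos x0 t r k = x0 + (\<Sum>j<k. t j *\<^sub>R r j)"

text \<open>A static scheduler strategy is a fixed sequence of timed moves (ms k, ts k), k = 0,1,...
  (round k+1 of the game). It is winning from x0 in S if all delays are positive, the
  total time diverges, and against every choice of rates r k \<in> R (ms k) (equivalently,
  every environment strategy) the trajectory stays in S, including during each move.\<close>
definition static_winning ::
  "'m set \<Rightarrow> ('m \<Rightarrow> (real^'n) set) \<Rightarrow> (real^'n) set \<Rightarrow> real^'n
     \<Rightarrow> (nat \<Rightarrow> 'm) \<Rightarrow> (nat \<Rightarrow> real) \<Rightarrow> bool" where
  "static_winning M R S x0 ms ts \<longleftrightarrow>
     (\<forall>k. ms k \<in> M \<and> 0 < ts k) \<and> \<not> summable ts \<and>
     (\<forall>r. (\<forall>k. r k \<in> R (ms k)) \<longrightarrow>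
        (\<forall>k. \<forall>\<tau>\<in>{0..ts k}. pos x0 ts r k + \<tau> *\<^sub>R r k \<in> S))"

end

theory Submission
  imports Defs
begin
lemma pullback:
  fixes c :: "'m \<Rightarrow> 'a::real_vector"
  assumes "finite A" "y \<in> convex hull (c ` A)"
  shows "\<exists>w. (\<forall>m\<in>A. 0 \<le> w m) \<and> sum w A = 1 \<and> (\<Sum>m\<in>A. w m *\<^sub>R c m) = y"
proof -
  from assms obtain u where u: "\<forall>x\<in>c`A. 0 \<le> u x" "sum u (c`A) = 1" "(\<Sum>x\<in>c`A. u x *\<^sub>R x) = y"
    using convex_hull_finite[of "c`A"] by auto
  define g where "g = inv_into A c"
  define w where "w m = (if m = g (c m) then u (c m) else 0)" for m
  have G: "{m\<in>A. m = g (c m)} = g ` (c ` A)"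
    unfolding g_def using inv_into_into[of _ c A] f_inv_into_f[of _ c A] by force
  have inj: "inj_on g (c ` A)" unfolding g_def by (simp add: inj_on_inv_into)
  have cg: "\<And>p. p \<in> c ` A \<Longrightarrow> c (g p) = p" unfolding g_def by (simp add: f_inv_into_f)
  have "sum w A = sum (\<lambda>m. u (c m)) {m\<in>A. m = g (c m)}"
    unfolding w_def using assms(1) by (simp add: sum.inter_filter[symmetric] if_distrib)
  also have "\<dots> = sum (\<lambda>m. u (c m)) (g ` (c ` A))" using G by simp
  also have "\<dots> = sum u (c ` A)" using sum.reindex[OF inj, of "\<lambda>m. u (c m)"] cg by simp
  finally have s1: "sum w A = 1" using u by simp
  have "(\<Sum>m\<in>A. w m *\<^sub>R c m) = (\<Sum>m\<in>A. if m = g (c m) then u (c m) *\<^sub>R c m else 0)"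
    unfolding w_def by (rule sum.cong) auto
  also have "\<dots> = (\<Sum>m\<in>{m\<in>A. m = g (c m)}. u (c m) *\<^sub>R c m)"
    using assms(1) by (simp add: sum.inter_filter)
  also have "\<dots> = (\<Sum>m\<in>g ` (c ` A). u (c m) *\<^sub>R c m)" using G by simp
  also have "\<dots> = (\<Sum>x\<in>c`A. u x *\<^sub>R x)" using sum.reindex[OF inj, of "\<lambda>m. u (c m) *\<^sub>R c m"] cg by simp
  finally have s2: "(\<Sum>m\<in>A. w m *\<^sub>R c m) = y" using u by simp
  have "\<forall>m\<in>A. 0 \<le> w m" unfolding w_def using u by auto
  with s1 s2 show ?thesis by blast
qed

lemma periodic_sum:
  fixes f :: "nat \<Rightarrow> 'a::real_vector"
  assumes p: "0 < p" and per: "\<And>j. f j = f (j mod p)" and z: "(\<Sum>j<p. f j) = 0"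
  shows "(\<Sum>j<k. f j) = (\<Sum>j<k mod p. f j)"
proof (induction k)
  case 0 then show ?case by simp
next
  case (Suc k)
  have "(\<Sum>j<Suc k. f j) = (\<Sum>j<k mod p. f j) + f (k mod p)" using Suc per[of k] by simp
  also have "\<dots> = (\<Sum>j<Suc (k mod p). f j)" by simp
  also have "\<dots> = (\<Sum>j<Suc k mod p. f j)"
  proof (cases "Suc (k mod p) < p")
    case True
    then have "Suc k mod p = Suc (k mod p)" by (metis mod_Suc mod_less)
    then show ?thesis by simp
  next
    case False
    then have "Suc (k mod p) = p" using p by (meson Suc_lessI mod_less_divisor)
    moreover have "Suc k mod p = 0" using calculation by (metis mod_Suc mod_self)
    ultimately show ?thesis using z by simp
  qed
  finally show ?case .
qed

lemma sufficient:
  fixes M :: "'m set" and R :: "'m \<Rightarrow> (real^'n) set"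
  assumes bms: "is_BMS M R" and x0: "x0 \<in> interior S" and sub: "M' \<subseteq> M"
    and sing: "\<forall>m\<in>M'. R m = {Rc m}" and safe: "safe_CMS M' Rc"
  shows "\<exists>ms ts. static_winning M R S x0 ms ts"
proof -
  have finM: "finite M'" using bms sub unfolding is_BMS_def using finite_subset by blast
  obtain t where t0: "\<forall>m\<in>M'. 0 \<le> t m" and t1: "sum t M' = 1"
    and tz: "(\<Sum>m\<in>M'. t m *\<^sub>R Rc m) = 0"
    using safe unfolding safe_CMS_def by blast
  define P where "P = {m\<in>M'. 0 < t m}"
  have PM: "P \<subseteq> M'" unfolding P_def by auto
  have finP: "finite P" using finM PM finite_subset by blast
  have "P \<noteq> {}"
  proof
    assume "P = {}"
    then have "\<forall>m\<in>M'. t m = 0" using t0 unfolding P_def by force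
    then show False using t1 by simp
  qed
  obtain L where L: "set L = P" "distinct L" using finite_distinct_list[OF finP] by blast
  define p where "p = length L"
  have p0: "0 < p" using L \<open>P \<noteq> {}\<close> unfolding p_def by (cases L) auto
  have memL: "\<And>k. L ! (k mod p) \<in> P" using L p0 unfolding p_def by (metis mod_less_divisor nth_mem)
  obtain e where e: "e > 0" "ball x0 e \<subseteq> S" using x0 mem_interior by blast
  define h where "h m = t m *\<^sub>R Rc m" for m
  define f where "f j = h (L ! (j mod p))" for j
  define C0 where "C0 = (\<Sum>j<p. norm (f j))"
  have C0: "C0 \<ge> 0" unfolding C0_def by (simp add: sum_nonneg)
  define eps where "eps = e / (2 * C0 + 1)"
  have eps: "eps > 0" using e C0 unfolding eps_def by simp
  have eps2: "eps * (2 * C0) < e"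
  proof -
    have "eps * (2 * C0 + 1) = e" unfolding eps_def using C0 by simp
    then show ?thesis using eps by (simp add: algebra_simps)
  qed
  have per: "\<And>j. f j = f (j mod p)" unfolding f_def by simp
  have "(\<Sum>j<p. f j) = (\<Sum>j<p. h (L ! j))" unfolding f_def by simp
  also have "\<dots> = sum_list (map h L)"
    by (simp add: sum_list_sum_nth p_def atLeast0LessThan)
  also have "\<dots> = sum h P" using L by (simp add: sum_list_distinct_conv_sum_set)
  also have "\<dots> = sum h M'"
    by (rule sum.mono_neutral_left[OF finM PM]) (auto simp: P_def h_def dest: bspec[OF t0])
  also have "\<dots> = 0" using tz unfolding h_def .
  finally have z: "(\<Sum>j<p. f j) = 0" .
  have gk: "\<And>k. norm (\<Sum>j<k. f j) \<le> C0"
  proof -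
    fix k
    have "norm (\<Sum>j<k. f j) = norm (\<Sum>j<k mod p. f j)" using periodic_sum[OF p0 per z] by simp
    also have "\<dots> \<le> (\<Sum>j<k mod p. norm (f j))" by (rule norm_sum)
    also have "\<dots> \<le> C0" unfolding C0_def
      by (rule sum_mono2) (use p0 in auto)
    finally show "norm (\<Sum>j<k. f j) \<le> C0" .
  qed
  have fk: "\<And>k. norm (f k) \<le> C0"
  proof -
    fix k
    have "norm (f k) = norm (f (k mod p))" using per by simp
    also have "\<dots> \<le> C0" unfolding C0_def
      by (rule member_le_sum) (use p0 in auto)
    finally show "norm (f k) \<le> C0" .
  qed
  define ms where "ms k = L ! (k mod p)" for k
  define ts where "ts k = eps * t (L ! (k mod p))" for k
  define tmin where "tmin = Min (t ` P)"
  have tmin: "tmin > 0" unfolding tmin_def using finP \<open>P \<noteq> {}\<close> by (auto simp: P_def)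
  have tsge: "\<And>k. eps * tmin \<le> ts k" unfolding ts_def tmin_def
    using eps memL finP by (auto intro!: mult_left_mono Min_le)
  have msM: "\<And>k. ms k \<in> M" unfolding ms_def using memL PM sub by blast
  have tspos: "\<And>k. 0 < ts k" using tsge eps tmin by (meson less_le_trans mult_pos_pos)
  have nsum: "\<not> summable ts"
  proof
    assume "summable ts"
    then have "summable (\<lambda>_::nat. eps * tmin)"
      by (rule summable_comparison_test[rotated]) (use tsge eps tmin in auto)
    then show False using eps tmin summable_const_iff by (metis less_irrefl mult_pos_pos)
  qed
  have win: "\<forall>r. (\<forall>k. r k \<in> R (ms k)) \<longrightarrow>
        (\<forall>k. \<forall>\<tau>\<in>{0..ts k}. pos x0 ts r k + \<tau> *\<^sub>R r k \<in> S)"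
  proof (intro allI impI ballI)
    fix r k \<tau>
    assume r: "\<forall>k. r k \<in> R (ms k)" and tau: "\<tau> \<in> {0..ts k}"
    have rk: "\<And>k. r k = Rc (ms k)" using r sing memL PM unfolding ms_def by force
    have "pos x0 ts r k = x0 + eps *\<^sub>R (\<Sum>j<k. f j)"
      unfolding pos_def rk ts_def f_def h_def ms_def by (simp add: scaleR_sum_right)
    moreover have "norm (\<tau> *\<^sub>R r k) \<le> eps * C0"
    proof -
      have "norm (\<tau> *\<^sub>R r k) = \<tau> * norm (Rc (ms k))" using tau rk by simp
      also have "\<dots> \<le> ts k * norm (Rc (ms k))" using tau by (simp add: mult_right_mono)
      also have "\<dots> = eps * norm (f k)" unfolding ts_def f_def h_def ms_def
        using memL[of k] unfolding P_def by (simp add: abs_of_pos)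
      also have "\<dots> \<le> eps * C0" using fk eps by (simp add: mult_left_mono)
      finally show ?thesis .
    qed
    moreover have "norm (eps *\<^sub>R (\<Sum>j<k. f j)) \<le> eps * C0"
      using gk[of k] eps by (simp add: mult_left_mono)
    ultimately have "norm (pos x0 ts r k + \<tau> *\<^sub>R r k - x0) \<le> eps * (2 * C0)"
    proof -
      assume a1: "pos x0 ts r k = x0 + eps *\<^sub>R (\<Sum>j<k. f j)"
        and a2: "norm (\<tau> *\<^sub>R r k) \<le> eps * C0" and a3: "norm (eps *\<^sub>R (\<Sum>j<k. f j)) \<le> eps * C0"
      have "pos x0 ts r k + \<tau> *\<^sub>R r k - x0 = eps *\<^sub>R (\<Sum>j<k. f j) + \<tau> *\<^sub>R r k"
        using a1 by simp
      then have "norm (pos x0 ts r k + \<tau> *\<^sub>R r k - x0) \<le> norm (eps *\<^sub>R (\<Sum>j<k. f j)) + norm (\<tau> *\<^sub>R r k)"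
        by (simp only:) (rule norm_triangle_ineq)
      moreover have "eps * (2 * C0) = eps * C0 + eps * C0" by (simp add: algebra_simps)
      ultimately show ?thesis using a2 a3 by linarith
    qed
    then have "pos x0 ts r k + \<tau> *\<^sub>R r k \<in> ball x0 e"
      using eps2 by (simp add: dist_norm norm_minus_commute)
    then show "pos x0 ts r k + \<tau> *\<^sub>R r k \<in> S" using e by blast
  qed
  have "static_winning M R S x0 ms ts"
    unfolding static_winning_def using msM tspos nsum win by blast
  then show ?thesis by blast
qed

lemma sum_by_mode:
  fixes ms :: "nat \<Rightarrow> 'm" and v :: "'m \<Rightarrow> 'a::real_vector"
  assumes fin: "finite M" and msM: "\<And>k. ms k \<in> M"
  shows "(\<Sum>j<k. ts j *\<^sub>R v (ms j)) = (\<Sum>m\<in>M. (\<Sum>j<k. if ms j = m then ts j else 0) *\<^sub>R v m)"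
proof -
  have "\<And>j. ts j *\<^sub>R v (ms j) = (\<Sum>m\<in>M. (if ms j = m then ts j else 0) *\<^sub>R v m)"
  proof -
    fix j
    have "(\<Sum>m\<in>M. (if ms j = m then ts j else 0) *\<^sub>R v m) = (\<Sum>m\<in>M. if ms j = m then ts j *\<^sub>R v m else 0)"
      by (rule sum.cong) auto
    also have "\<dots> = ts j *\<^sub>R v (ms j)" using fin msM[of j] by (simp add: sum.delta)
    finally show "ts j *\<^sub>R v (ms j) = (\<Sum>m\<in>M. (if ms j = m then ts j else 0) *\<^sub>R v m)" by simp
  qed
  then have "(\<Sum>j<k. ts j *\<^sub>R v (ms j)) = (\<Sum>j<k. \<Sum>m\<in>M. (if ms j = m then ts j else 0) *\<^sub>R v m)"
    by simp
  also have "\<dots> = (\<Sum>m\<in>M. \<Sum>j<k. (if ms j = m then ts j else 0) *\<^sub>R v m)" by (rule sum.swap)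
  also have "\<dots> = (\<Sum>m\<in>M. (\<Sum>j<k. if ms j = m then ts j else 0) *\<^sub>R v m)"
    by (simp add: scaleR_sum_left)
  finally show ?thesis .
qed

lemma necessary:
  fixes M :: "'m set" and R :: "'m \<Rightarrow> (real^'n) set"
  assumes bms: "is_BMS M R" and polyS: "polytope S" and W: "static_winning M R S x0 ms ts"
  shows "\<exists>M'\<subseteq>M. \<exists>Rc. (\<forall>m\<in>M'. R m = {Rc m}) \<and> safe_CMS M' Rc"
proof -
  have finM: "finite M" and Rne: "\<And>m. m \<in> M \<Longrightarrow> R m \<noteq> {}" using bms unfolding is_BMS_def by auto
  have msM: "\<And>k. ms k \<in> M" and tsp: "\<And>k. 0 < ts k" and nsum: "\<not> summable ts"
    using W unfolding static_winning_def by auto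
  have envall: "\<forall>r. (\<forall>k. r k \<in> R (ms k)) \<longrightarrow> (\<forall>k. \<forall>\<tau>\<in>{0..ts k}. pos x0 ts r k + \<tau> *\<^sub>R r k \<in> S)"
    using W unfolding static_winning_def by blast
  have env: "\<And>r k. (\<forall>k. r k \<in> R (ms k)) \<Longrightarrow> pos x0 ts r k \<in> S"
  proof -
    fix r k assume "\<forall>k. r k \<in> R (ms k)"
    moreover have "(0::real) \<in> {0..ts k}" using tsp[of k] by simp
    ultimately have "pos x0 ts r k + 0 *\<^sub>R r k \<in> S" using envall by blast
    then show "pos x0 ts r k \<in> S" by simp
  qed
  have "bounded S" using polytope_imp_compact[OF polyS] compact_imp_bounded by blast
  then obtain B where B: "\<And>x. x \<in> S \<Longrightarrow> norm x \<le> B" unfolding bounded_iff by blast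
  define ch where "ch m = (SOME x. x \<in> R m)" for m
  have ch: "\<And>m. m \<in> M \<Longrightarrow> ch m \<in> R m" unfolding ch_def using Rne by (simp add: some_in_eq)
  define N where "N = {m\<in>M. \<not> (\<exists>c. R m = {c})}"
  define M' where "M' = M - N"
  define T where "T m k = (\<Sum>j<k. if ms j = m then ts j else 0)" for m k
  have T0: "\<And>m k. 0 \<le> T m k" unfolding T_def using tsp by (auto intro!: sum_nonneg simp: less_imp_le)
  have posrep: "\<And>r k. pos x0 ts r k = x0 + (\<Sum>j<k. ts j *\<^sub>R r j)" unfolding pos_def by simp
  have TN: "\<forall>m\<in>N. \<exists>b. \<forall>k. T m k \<le> b"
  proof
    fix m assume mN: "m \<in> N"
    then have mM: "m \<in> M" unfolding N_def by auto
    have ns: "\<not> (\<exists>c. R m = {c})" using mN unfolding N_def by auto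
    obtain a where a: "a \<in> R m" using Rne[OF mM] by blast
    have "\<exists>b\<in>R m. b \<noteq> a"
    proof (rule ccontr)
      assume "\<not> (\<exists>b\<in>R m. b \<noteq> a)"
      then have "R m = {a}" using a by blast
      then show False using ns by blast
    qed
    then obtain b where b: "b \<in> R m" "b \<noteq> a" by blast
    have ab: "a \<in> R m" "b \<in> R m" "a \<noteq> b" using a b by auto
    define r1 where "r1 k = (if ms k = m then a else ch (ms k))" for k
    define r2 where "r2 k = (if ms k = m then b else ch (ms k))" for k
    have r1: "\<forall>k. r1 k \<in> R (ms k)" unfolding r1_def using ab ch msM by auto
    have r2: "\<forall>k. r2 k \<in> R (ms k)" unfolding r2_def using ab ch msM by auto
    have nab: "norm (a - b) > 0" using ab by simp
    show "\<exists>c. \<forall>k. T m k \<le> c"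
    proof (intro exI allI)
      fix k
      have "pos x0 ts r1 k - pos x0 ts r2 k = (\<Sum>j<k. ts j *\<^sub>R r1 j - ts j *\<^sub>R r2 j)"
        unfolding pos_def by (simp add: sum_subtractf)
      also have "\<dots> = (\<Sum>j<k. (if ms j = m then ts j else 0) *\<^sub>R (a - b))"
        by (rule sum.cong) (auto simp: r1_def r2_def algebra_simps)
      also have "\<dots> = T m k *\<^sub>R (a - b)" unfolding T_def by (simp add: scaleR_sum_left)
      finally have eq: "pos x0 ts r1 k - pos x0 ts r2 k = T m k *\<^sub>R (a - b)" .
      have "norm (pos x0 ts r1 k - pos x0 ts r2 k) \<le> norm (pos x0 ts r1 k) + norm (pos x0 ts r2 k)"
        by (rule norm_triangle_ineq4)
      also have "\<dots> \<le> 2 * B" using B[OF env[OF r1, of k]] B[OF env[OF r2, of k]] by linarith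
      finally have "T m k * norm (a - b) \<le> 2 * B" using eq T0[of m k] by simp
      then show "T m k \<le> 2 * B / norm (a - b)" using nab by (simp add: le_divide_eq)
    qed
  qed
  then obtain BN where BN: "\<And>m k. m \<in> N \<Longrightarrow> T m k \<le> BN m" by metis
  have finN: "finite N" and finM': "finite M'" using finM unfolding N_def M'_def by auto
  have MU: "M = M' \<union> N" "M' \<inter> N = {}" unfolding M'_def N_def by auto
  have Asum: "\<And>k. (\<Sum>j<k. ts j) = (\<Sum>m\<in>M. T m k)"
    using sum_by_mode[OF finM msM, where ts=ts and v="\<lambda>_. 1::real"] unfolding T_def by simp
  have unb: "\<And>X. \<exists>k. (\<Sum>j<k. ts j) > X"
  proof (rule ccontr)
    fix X assume "\<not> (\<exists>k. (\<Sum>j<k. ts j) > X)"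
    then have "\<And>n. (\<Sum>k\<le>n. ts k) \<le> X" by (metis lessThan_Suc_atMost not_less)
    then have "summable ts" using tsp by (intro bounded_imp_summable) (auto simp: less_imp_le)
    then show False using nsum by simp
  qed
  have RM': "\<And>m. m \<in> M' \<Longrightarrow> R m = {ch m}"
    using ch unfolding M'_def N_def by fastforce
  define K where "K = 2 * B + (\<Sum>m\<in>N. BN m * norm (ch m))"
  have main: "\<And>k. norm (\<Sum>m\<in>M'. T m k *\<^sub>R ch m) \<le> K"
  proof -
    fix k
    have r0: "\<forall>k. ch (ms k) \<in> R (ms k)" using ch msM by auto
    have "pos x0 ts (\<lambda>k. ch (ms k)) k - x0 = (\<Sum>m\<in>M. T m k *\<^sub>R ch m)"
      unfolding pos_def T_def using sum_by_mode[OF finM msM, where ts=ts and v=ch] by simp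
    also have "\<dots> = (\<Sum>m\<in>M'. T m k *\<^sub>R ch m) + (\<Sum>m\<in>N. T m k *\<^sub>R ch m)"
      using MU finM' finN by (simp add: sum.union_disjoint)
    finally have eq: "(\<Sum>m\<in>M'. T m k *\<^sub>R ch m) = (pos x0 ts (\<lambda>k. ch (ms k)) k - x0) - (\<Sum>m\<in>N. T m k *\<^sub>R ch m)"
      by (simp add: algebra_simps)
    have n1: "norm (pos x0 ts (\<lambda>k. ch (ms k)) k - x0) \<le> 2 * B"
    proof -
      have "x0 = pos x0 ts (\<lambda>k. ch (ms k)) 0" unfolding pos_def by simp
      then have "x0 \<in> S" using env[OF r0] by metis
      then have "norm x0 \<le> B" using B by blast
      moreover have "norm (pos x0 ts (\<lambda>k. ch (ms k)) k) \<le> B" using B env[OF r0, of k] by blast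
      moreover have "norm (pos x0 ts (\<lambda>k. ch (ms k)) k - x0) \<le> norm (pos x0 ts (\<lambda>k. ch (ms k)) k) + norm x0"
        by (rule norm_triangle_ineq4)
      ultimately show ?thesis by linarith
    qed
    have n2: "norm (\<Sum>m\<in>N. T m k *\<^sub>R ch m) \<le> (\<Sum>m\<in>N. BN m * norm (ch m))"
    proof -
      have "norm (\<Sum>m\<in>N. T m k *\<^sub>R ch m) \<le> (\<Sum>m\<in>N. norm (T m k *\<^sub>R ch m))" by (rule norm_sum)
      also have "\<dots> \<le> (\<Sum>m\<in>N. BN m * norm (ch m))"
        using BN T0 by (intro sum_mono) (simp add: mult_right_mono)
      finally show ?thesis .
    qed
    have "norm (\<Sum>m\<in>M'. T m k *\<^sub>R ch m) \<le> norm (pos x0 ts (\<lambda>k. ch (ms k)) k - x0) + norm (\<Sum>m\<in>N. T m k *\<^sub>R ch m)"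
      unfolding eq by (rule norm_triangle_ineq4)
    then show "norm (\<Sum>m\<in>M'. T m k *\<^sub>R ch m) \<le> K" using n1 n2 unfolding K_def by linarith
  qed
  have K0: "0 \<le> K" using main[of 0] norm_ge_zero order_trans by blast
  define H where "H = convex hull (ch ` M')"
  have "0 \<in> closure H"
    unfolding closure_approachable
  proof (intro allI impI)
    fix e :: real assume e: "e > 0"
    obtain k where k: "(\<Sum>j<k. ts j) > K / e + (\<Sum>m\<in>N. BN m)" using unb by blast
    define Tp where "Tp = (\<Sum>m\<in>M'. T m k)"
    have "(\<Sum>j<k. ts j) = Tp + (\<Sum>m\<in>N. T m k)"
      unfolding Asum Tp_def using MU finM' finN by (simp add: sum.union_disjoint)
    moreover have "(\<Sum>m\<in>N. T m k) \<le> (\<Sum>m\<in>N. BN m)" using BN by (intro sum_mono) auto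
    ultimately have Tp: "Tp > K / e" using k by linarith
    have Kde: "K / e \<ge> 0" using K0 e by simp
    have Tpos: "Tp > 0" using Tp Kde by linarith
    define y where "y = (\<Sum>m\<in>M'. (T m k / Tp) *\<^sub>R ch m)"
    have yH: "y \<in> H" unfolding y_def H_def
    proof (rule convex_sum[OF finM'])
      show "convex (convex hull (ch ` M'))" by simp
      show "(\<Sum>m\<in>M'. T m k / Tp) = 1" using Tpos unfolding Tp_def by (simp add: sum_divide_distrib[symmetric])
      show "\<And>i. i \<in> M' \<Longrightarrow> 0 \<le> T i k / Tp" using T0 Tpos by simp
      show "\<And>i. i \<in> M' \<Longrightarrow> ch i \<in> convex hull (ch ` M')" by (simp add: hull_inc)
    qed
    have "y = (1 / Tp) *\<^sub>R (\<Sum>m\<in>M'. T m k *\<^sub>R ch m)"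
      unfolding y_def by (simp add: scaleR_sum_right)
    then have "norm y = norm (\<Sum>m\<in>M'. T m k *\<^sub>R ch m) / Tp" using Tpos by simp
    also have "\<dots> \<le> K / Tp" using main[of k] Tpos by (simp add: divide_right_mono)
    also have "\<dots> < e"
    proof -
      have "K < e * Tp" using Tp e by (simp add: divide_less_eq mult.commute)
      then show ?thesis using Tpos by (simp add: divide_less_eq mult.commute)
    qed
    finally show "\<exists>y\<in>H. dist y 0 < e" using yH by auto
  qed
  moreover have "closed H" unfolding H_def
    using finite_imp_compact_convex_hull[of "ch ` M'"] finM' compact_imp_closed by blast
  ultimately have "0 \<in> H" by (simp add: closure_closed)
  then obtain w where w: "\<forall>m\<in>M'. 0 \<le> w m" "sum w M' = 1" "(\<Sum>m\<in>M'. w m *\<^sub>R ch m) = 0"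
    using pullback[OF finM'] unfolding H_def by blast
  have "M' \<noteq> {}" using w(2) by auto
  then have "safe_CMS M' ch" unfolding safe_CMS_def using w by blast
  moreover have "M' \<subseteq> M" unfolding M'_def by auto
  ultimately show ?thesis using RM' by blast
qed
theorem proposition4:
  fixes M :: "'m set" and R :: "'m \<Rightarrow> (real^'n) set"
    and S :: "(real^'n) set" and x0 :: "real^'n"
  assumes "is_BMS M R"
    and "polytope S"
    and "x0 \<in> interior S"
  shows "(\<exists>ms ts. static_winning M R S x0 ms ts) \<longleftrightarrow>
         (\<exists>M'\<subseteq>M. \<exists>Rc. (\<forall>m\<in>M'. R m = {Rc m}) \<and> safe_CMS M' Rc)"
proof
  assume "\<exists>ms ts. static_winning M R S x0 ms ts"
  then obtain ms ts where "static_winning M R S x0 ms ts" by blast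
  then show "\<exists>M'\<subseteq>M. \<exists>Rc. (\<forall>m\<in>M'. R m = {Rc m}) \<and> safe_CMS M' Rc"
    by (rule necessary[OF assms(1,2)])
next
  assume "\<exists>M'\<subseteq>M. \<exists>Rc. (\<forall>m\<in>M'. R m = {Rc m}) \<and> safe_CMS M' Rc"
  then obtain M' Rc where "M' \<subseteq> M" "\<forall>m\<in>M'. R m = {Rc m}" "safe_CMS M' Rc" by blast
  then show "\<exists>ms ts. static_winning M R S x0 ms ts"
    by (rule sufficient[OF assms(1,3)])
qed

end
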